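(* For all $i \in \mathbb{N}$ and all $t \geq 0$, at most $((1+\alpha)^i - 1)N(t)$ nodes enter during $(t, t+Di]$ and $(1-\alpha)^i N(t) \leq N(t+Di) \leq (1+\alpha)^i N(t)$.
   Context: Consider an asynchronous message-passing system whose composition changes over time. An adversary generates, for each node $p$, at most one Enter($p$) signal and at most one Leave($p$) signal (a Leave($p$) signal for a crashed node $p$ may be generated at another active node; such forced leaves also count as leaves). A node is present at time $t$ if it has entered but not left by time $t$; $N(t)$ denotes the number of nodes present at time $t$. $D$ is an upper bound (unknown to the nodes) on message delay. Churn assumption: there is a constant $\alpha < 1$ (the churn rate) such that for every time $t$, the total number of nodes that enter or leave during $[t, t+D]$ is at most $\alpha N(t)$. *)

theory Defs
  imports Complex_Main
begin

text \<open>A churn schedule is given by two partial functions on nodes: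
  enter p = Some e  : the (unique) Enter(p) signal occurs at time e;
  leave p = Some l  : the (unique) Leave(p) signal (possibly forced) occurs at time l.
  None means the corresponding signal is never generated.\<close>

definition present :: "('a \<Rightarrow> real option) \<Rightarrow> ('a \<Rightarrow> real option) \<Rightarrow> real \<Rightarrow> 'a set" where
  "present enter leave t =
     {p. (\<exists>e. enter p = Some e \<and> e \<le> t) \<and> \<not> (\<exists>l. leave p = Some l \<and> l \<le> t)}"

definition Nnodes :: "('a \<Rightarrow> real option) \<Rightarrow> ('a \<Rightarrow> real option) \<Rightarrow> real \<Rightarrow> nat" where
  "Nnodes enter leave t = card (present enter leave t)"

definition enters_in :: "('a \<Rightarrow> real option) \<Rightarrow> real set \<Rightarrow> 'a set" where
  "enters_in enter S = {p. \<exists>e. enter p = Some e \<and> e \<in> S}"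

definition leaves_in :: "('a \<Rightarrow> real option) \<Rightarrow> real set \<Rightarrow> 'a set" where
  "leaves_in leave S = {p. \<exists>l. leave p = Some l \<and> l \<in> S}"

definition churn_ok :: "('a \<Rightarrow> real option) \<Rightarrow> ('a \<Rightarrow> real option) \<Rightarrow> real \<Rightarrow> real \<Rightarrow> bool" where
  "churn_ok enter leave \<alpha> D \<longleftrightarrow>
     (\<forall>t\<ge>0. finite (enters_in enter {t..t+D}) \<and> finite (leaves_in leave {t..t+D}) \<and>
        real (card (enters_in enter {t..t+D}) + card (leaves_in leave {t..t+D}))
          \<le> \<alpha> * real (Nnodes enter leave t))"

end

theory Submission
  imports Defs
begin

lemma enters_mono: "S \<subseteq> T \<Longrightarrow> enters_in enter S \<subseteq> enters_in enter T"
  unfolding enters_in_def by blast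

lemma leaves_mono: "S \<subseteq> T \<Longrightarrow> leaves_in leave S \<subseteq> leaves_in leave T"
  unfolding leaves_in_def by blast

lemma enters_Un: "enters_in enter (S \<union> T) = enters_in enter S \<union> enters_in enter T"
  unfolding enters_in_def by blast

lemma pres_up: "D \<ge> 0 \<Longrightarrow> present enter leave (s + D) \<subseteq> present enter leave s \<union> enters_in enter {s<..s+D}"
  unfolding present_def enters_in_def by force

lemma pres_down: "D \<ge> 0 \<Longrightarrow> present enter leave s \<subseteq> present enter leave (s + D) \<union> leaves_in leave {s<..s+D}"
  unfolding present_def leaves_in_def by force

lemma step:
  assumes fin: "\<And>t. finite (present enter leave t)"
    and ch: "churn_ok enter leave \<alpha> D" and s: "s \<ge> 0" and D: "D > 0"
  shows "finite (enters_in enter {s<..s+D})"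
    and "real (card (enters_in enter {s<..s+D})) + real (card (leaves_in leave {s<..s+D}))
          \<le> \<alpha> * real (Nnodes enter leave s)"
    and "real (Nnodes enter leave (s+D)) \<le> real (Nnodes enter leave s) + real (card (enters_in enter {s<..s+D}))"
    and "real (Nnodes enter leave s) \<le> real (Nnodes enter leave (s+D)) + real (card (leaves_in leave {s<..s+D}))"
proof -
  have c: "finite (enters_in enter {s..s+D})" "finite (leaves_in leave {s..s+D})"
    "real (card (enters_in enter {s..s+D}) + card (leaves_in leave {s..s+D}))
          \<le> \<alpha> * real (Nnodes enter leave s)"
    using ch s unfolding churn_ok_def by auto
  have sub1: "enters_in enter {s<..s+D} \<subseteq> enters_in enter {s..s+D}"
    by (rule enters_mono) auto
  have sub2: "leaves_in leave {s<..s+D} \<subseteq> leaves_in leave {s..s+D}"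
    by (rule leaves_mono) auto
  show f1: "finite (enters_in enter {s<..s+D})" using c(1) sub1 finite_subset by blast
  have f2: "finite (leaves_in leave {s<..s+D})" using c(2) sub2 finite_subset by blast
  have "card (enters_in enter {s<..s+D}) \<le> card (enters_in enter {s..s+D})"
    using c(1) sub1 card_mono by blast
  moreover have "card (leaves_in leave {s<..s+D}) \<le> card (leaves_in leave {s..s+D})"
    using c(2) sub2 card_mono by blast
  ultimately show "real (card (enters_in enter {s<..s+D})) + real (card (leaves_in leave {s<..s+D}))
          \<le> \<alpha> * real (Nnodes enter leave s)" using c(3) by linarith
  have "Nnodes enter leave (s+D) \<le> card (present enter leave s \<union> enters_in enter {s<..s+D})"
    unfolding Nnodes_def using pres_up[where D=D and s=s and enter=enter and leave=leave] D fin f1 by (intro card_mono) auto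
  also have "\<dots> \<le> Nnodes enter leave s + card (enters_in enter {s<..s+D})"
    unfolding Nnodes_def by (rule card_Un_le)
  finally show "real (Nnodes enter leave (s+D)) \<le> real (Nnodes enter leave s) + real (card (enters_in enter {s<..s+D}))"
    by linarith
  have "Nnodes enter leave s \<le> card (present enter leave (s+D) \<union> leaves_in leave {s<..s+D})"
    unfolding Nnodes_def using pres_down[where D=D and s=s and enter=enter and leave=leave] D fin f2 by (intro card_mono) auto
  also have "\<dots> \<le> Nnodes enter leave (s+D) + card (leaves_in leave {s<..s+D})"
    unfolding Nnodes_def by (rule card_Un_le)
  finally show "real (Nnodes enter leave s) \<le> real (Nnodes enter leave (s+D)) + real (card (leaves_in leave {s<..s+D}))"
    by linarith
qed

theorem lemma1:
  fixes enter leave :: "'a \<Rightarrow> real option" and \<alpha> D :: real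
  assumes "\<alpha> < 1" and "0 < D"
    and "\<And>t. finite (present enter leave t)"
    and "churn_ok enter leave \<alpha> D"
  shows "\<forall>(i::nat) (t::real). t \<ge> 0 \<longrightarrow>
      real (card (enters_in enter {t<..t + D * real i}))
        \<le> ((1 + \<alpha>) ^ i - 1) * real (Nnodes enter leave t)
    \<and> (1 - \<alpha>) ^ i * real (Nnodes enter leave t) \<le> real (Nnodes enter leave (t + D * real i))
    \<and> real (Nnodes enter leave (t + D * real i)) \<le> (1 + \<alpha>) ^ i * real (Nnodes enter leave t)"
proof (intro allI impI)
  fix i :: nat and t :: real
  assume t: "t \<ge> 0"
  note st = step[OF assms(3) assms(4) _ assms(2)]
  have neg: "Nnodes enter leave s = 0" if "\<alpha> < 0" "s \<ge> 0" for s
  proof -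
    have "0 \<le> \<alpha> * real (Nnodes enter leave s)" using st(2)[OF that(2)] by simp
    thus ?thesis using that(1) by (simp add: zero_le_mult_iff)
  qed
  let ?N = "\<lambda>s. real (Nnodes enter leave s)"
  let ?E = "\<lambda>i. enters_in enter {t<..t + D * real i}"
  have "finite (?E i) \<and> real (card (?E i)) \<le> ((1 + \<alpha>) ^ i - 1) * ?N t
    \<and> (1 - \<alpha>) ^ i * ?N t \<le> ?N (t + D * real i)
    \<and> ?N (t + D * real i) \<le> (1 + \<alpha>) ^ i * ?N t"
  proof (induction i)
    case 0
    then show ?case by (simp add: enters_in_def)
  next
    case (Suc i)
    let ?s = "t + D * real i"
    have s0: "?s \<ge> 0" using t assms(2) by simp
    have eq: "t + D * real (Suc i) = ?s + D" by (simp add: algebra_simps)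
    have Di: "D * real i \<ge> 0" using assms(2) by simp
    have split: "?E (Suc i) = ?E i \<union> enters_in enter {?s<..?s+D}"
      unfolding eq enters_Un[symmetric]
      apply (rule arg_cong[where f="enters_in enter"])
      apply (rule set_eqI) apply (simp only: Un_iff greaterThanAtMost_iff)
      using Di assms(2) by linarith
    have fw: "finite (enters_in enter {?s<..?s+D})" using st(1)[OF s0] .
    have fin: "finite (?E (Suc i))" using split Suc fw by simp
    have cE: "real (card (?E (Suc i))) \<le> real (card (?E i)) + real (card (enters_in enter {?s<..?s+D}))"
      unfolding split using card_Un_le[of "?E i" "enters_in enter {?s<..?s+D}"] by linarith
    note w2 = st(2)[OF s0]
    note w3 = st(3)[OF s0]
    note w4 = st(4)[OF s0]
    have IH: "real (card (?E i)) \<le> ((1 + \<alpha>) ^ i - 1) * ?N t"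
      "(1 - \<alpha>) ^ i * ?N t \<le> ?N ?s" "?N ?s \<le> (1 + \<alpha>) ^ i * ?N t" using Suc by auto
    have cW: "real (card (enters_in enter {?s<..?s+D})) \<le> \<alpha> * ?N ?s" using w2 by simp
    have cL: "real (card (leaves_in leave {?s<..?s+D})) \<le> \<alpha> * ?N ?s" using w2 by simp
    show ?case
    proof (cases "\<alpha> < 0")
      case True
      have z1: "?N t = 0" using neg[OF True t] by simp
      have z2: "?N ?s = 0" using neg[OF True s0] by simp
      have z3: "?N (?s + D) = 0" using neg[OF True] s0 assms(2) by simp
      show ?thesis using fin cE IH cW z1 z2 z3 unfolding eq by simp
    next
      case False
      have a: "0 \<le> \<alpha>" using False by simp
      have "real (card (?E (Suc i))) \<le> ((1 + \<alpha>) ^ i - 1) * ?N t + \<alpha> * ((1 + \<alpha>) ^ i * ?N t)"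
        using cE IH(1) cW mult_left_mono[OF IH(3) a] by linarith
      also have "\<dots> = ((1 + \<alpha>) ^ Suc i - 1) * ?N t" by (simp add: algebra_simps)
      finally have A: "real (card (?E (Suc i))) \<le> ((1 + \<alpha>) ^ Suc i - 1) * ?N t" .
      have "(1 - \<alpha>) ^ Suc i * ?N t = (1 - \<alpha>) * ((1 - \<alpha>) ^ i * ?N t)" by simp
      also have "\<dots> \<le> (1 - \<alpha>) * ?N ?s" using mult_left_mono[OF IH(2)] assms(1) by simp
      also have "\<dots> \<le> ?N (?s + D)" using w4 cL by (simp add: algebra_simps)
      finally have B: "(1 - \<alpha>) ^ Suc i * ?N t \<le> ?N (?s + D)" .
      have "?N (?s + D) \<le> (1 + \<alpha>) * ?N ?s" using w3 cW by (simp add: algebra_simps)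
      also have "\<dots> \<le> (1 + \<alpha>) * ((1 + \<alpha>) ^ i * ?N t)" using mult_left_mono[OF IH(3)] a by simp
      also have "\<dots> = (1 + \<alpha>) ^ Suc i * ?N t" by simp
      finally have C: "?N (?s + D) \<le> (1 + \<alpha>) ^ Suc i * ?N t" .
      show ?thesis using fin A B C unfolding eq by blast
    qed
  qed
  thus "real (card (enters_in enter {t<..t + D * real i}))
        \<le> ((1 + \<alpha>) ^ i - 1) * real (Nnodes enter leave t)
    \<and> (1 - \<alpha>) ^ i * real (Nnodes enter leave t) \<le> real (Nnodes enter leave (t + D * real i))
    \<and> real (Nnodes enter leave (t + D * real i)) \<le> (1 + \<alpha>) ^ i * real (Nnodes enter leave t)"
    by blast
qed

end
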